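(* Let $\mathbb{F}$ be an algebraically closed field with $\mathrm{char}\,\mathbb{F}=2$, let $\mathbb{M}\subseteq\mathbf{O}$ be the quaternion subalgebra, and let $\mathrm{Stab}_{{\rm G}_2}(\mathbb{M})=\{g\in{\rm G}_2\mid g\mathbb{M}\subseteq\mathbb{M}\}$. Then: 1. For every $a\in\mathbb{M}$ with $\mathrm{tr}(a)=1$ and $n(a)=0$ there exists $g\in\mathrm{Stab}_{{\rm G}_2}(\mathbb{M})$ with $ga=e_1$. 2. For every $a\in\mathbb{M}$ with $\mathrm{tr}(a)=0$ and $n(a)=1$ there exists $g\in\mathrm{Stab}_{{\rm G}_2}(\mathbb{M})$ with $ga\in\{1_{\mathbf{O}},1_{\mathbf{O}}+\mathbf{u}_1\}$. 3. For every non-zero $\gamma\in\mathbb{F}$ there exists $\xi_\gamma\in\mathrm{Stab}_{{\rm G}_2}(\mathbb{M})$ such that for all $\alpha_1,\ldots,\alpha_4\in\mathbb{F}$, $\xi_\gamma\begin{pmatrix}\alpha_1&(\alpha_2,0,0)\\(\alpha_3,0,0)&\alpha_4\end{pmatrix}=\begin{pmatrix}\alpha_1&(\gamma\alpha_2,0,0)\\(\gamma^{-1}\alpha_3,0,0)&\alpha_4\end{pmatrix}$. 4. If $b_1,b_2\in\mathbb{M}$ satisfy $\mathrm{tr}(b_1)=\mathrm{tr}(e_1)$, $\mathrm{tr}(b_2)=\mathrm{tr}(e_2)$, $n(b_1)=n(e_1)$, $n(b_2)=n(e_2)$ and $\mathrm{tr}(b_1b_2)=\mathrm{tr}(e_1e_2)$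 (i.e. $(e_1,e_2)$ and $(b_1,b_2)$ are not separated by $S_2^{(2)}$), then there exists $g\in\mathrm{Stab}_{{\rm G}_2}(\mathbb{M})$ with $gb_1=e_1$ and $gb_2\in\{e_2,e_2+\mathbf{u}_1,e_2+\mathbf{v}_1\}$. 5. If $b\in\mathbb{M}$ satisfies $\mathrm{tr}(b)=n(b)=\mathrm{tr}(e_1b)=0$, then $b\in\mathbb{F}\mathbf{u}_1$ or $b\in\mathbb{F}\mathbf{v}_1$.
   Context: The split octonion algebra $\mathbf{O}$ is the 8-dimensional $\mathbb{F}$-vector space of formal matrices $a=\begin{pmatrix}\alpha&\mathbf{u}\\ \mathbf{v}&\beta\end{pmatrix}$ with $\alpha,\beta\in\mathbb{F}$, $\mathbf{u},\mathbf{v}\in\mathbb{F}^3$, with multiplication $\begin{pmatrix}\alpha&\mathbf{u}\\ \mathbf{v}&\beta\end{pmatrix}\begin{pmatrix}\alpha'&\mathbf{u}'\\ \mathbf{v}'&\beta'\end{pmatrix}=\begin{pmatrix}\alpha\alpha'+\mathbf{u}\cdot\mathbf{v}'&\alpha\mathbf{u}'+\beta'\mathbf{u}-\mathbf{v}\times\mathbf{v}'\\ \alpha'\mathbf{v}+\beta\mathbf{v}'+\mathbf{u}\times\mathbf{u}'&\beta\beta'+\mathbf{v}\cdot\mathbf{u}'\end{pmatrix}$ (dot product and cross product on $\mathbb{F}^3$). Trace $\mathrm{tr}(a)=\alpha+\beta$, norm $n(a)=\alpha\beta-\mathbf{u}\cdot\mathbf{v}$. With $\mathbf{c}_1$ the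 first standard basis vector of $\mathbb{F}^3$: $e_1$ has $\alpha=1$ and all else $0$, $e_2$ has $\beta=1$ and all else $0$, $\mathbf{u}_1$ has $\mathbf{u}=\mathbf{c}_1$ and all else $0$, $\mathbf{v}_1$ has $\mathbf{v}=\mathbf{c}_1$ and all else $0$, $1_{\mathbf{O}}=e_1+e_2$. The quaternion subalgebra is $\mathbb{M}=\left\{\begin{pmatrix}\alpha&(\gamma,0,0)\\(\delta,0,0)&\beta\end{pmatrix}\mid\alpha,\beta,\gamma,\delta\in\mathbb{F}\right\}$ (isomorphic to $M_2(\mathbb{F})$). ${\rm G}_2=\mathrm{Aut}(\mathbf{O})$. *)

theory Defs
  imports "HOL-Computational_Algebra.Polynomial"
begin

text \<open>Split octonions over a field: formal matrices (alpha, u; v, beta),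
  alpha, beta scalars, u, v in F^3 (triples).\<close>

datatype 'a oct = Oct (oal: 'a) (ouu: "'a \<times> 'a \<times> 'a") (ovv: "'a \<times> 'a \<times> 'a") (obe: 'a)

definition vdot :: "'a::comm_ring_1 \<times> 'a \<times> 'a \<Rightarrow> 'a \<times> 'a \<times> 'a \<Rightarrow> 'a" where
  "vdot x y = (case x of (x1,x2,x3) \<Rightarrow> case y of (y1,y2,y3) \<Rightarrow> x1*y1 + x2*y2 + x3*y3)"

definition vcross :: "'a::comm_ring_1 \<times> 'a \<times> 'a \<Rightarrow> 'a \<times> 'a \<times> 'a \<Rightarrow> 'a \<times> 'a \<times> 'a" where
  "vcross x y = (case x of (x1,x2,x3) \<Rightarrow> case y of (y1,y2,y3) \<Rightarrow>
      (x2*y3 - x3*y2, x3*y1 - x1*y3, x1*y2 - x2*y1))"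

definition vadd :: "'a::comm_ring_1 \<times> 'a \<times> 'a \<Rightarrow> 'a \<times> 'a \<times> 'a \<Rightarrow> 'a \<times> 'a \<times> 'a" where
  "vadd x y = (case x of (x1,x2,x3) \<Rightarrow> case y of (y1,y2,y3) \<Rightarrow> (x1+y1, x2+y2, x3+y3))"

definition vsmul :: "'a::comm_ring_1 \<Rightarrow> 'a \<times> 'a \<times> 'a \<Rightarrow> 'a \<times> 'a \<times> 'a" where
  "vsmul c x = (case x of (x1,x2,x3) \<Rightarrow> (c*x1, c*x2, c*x3))"

definition vneg :: "'a::comm_ring_1 \<times> 'a \<times> 'a \<Rightarrow> 'a \<times> 'a \<times> 'a" where
  "vneg x = vsmul (-1) x"

definition oadd :: "'a::comm_ring_1 oct \<Rightarrow> 'a oct \<Rightarrow> 'a oct" where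
  "oadd a b = Oct (oal a + oal b) (vadd (ouu a) (ouu b)) (vadd (ovv a) (ovv b)) (obe a + obe b)"

definition osmul :: "'a::comm_ring_1 \<Rightarrow> 'a oct \<Rightarrow> 'a oct" where
  "osmul c a = Oct (c * oal a) (vsmul c (ouu a)) (vsmul c (ovv a)) (c * obe a)"

definition omult :: "'a::comm_ring_1 oct \<Rightarrow> 'a oct \<Rightarrow> 'a oct" where
  "omult a b = Oct
     (oal a * oal b + vdot (ouu a) (ovv b))
     (vadd (vadd (vsmul (oal a) (ouu b)) (vsmul (obe b) (ouu a))) (vneg (vcross (ovv a) (ovv b))))
     (vadd (vadd (vsmul (oal b) (ovv a)) (vsmul (obe a) (ovv b))) (vcross (ouu a) (ouu b)))
     (obe a * obe b + vdot (ovv a) (ouu b))"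

definition otr :: "'a::comm_ring_1 oct \<Rightarrow> 'a" where
  "otr a = oal a + obe a"

definition onorm :: "'a::comm_ring_1 oct \<Rightarrow> 'a" where
  "onorm a = oal a * obe a - vdot (ouu a) (ovv a)"

definition oe1 :: "'a::comm_ring_1 oct" where "oe1 = Oct 1 (0,0,0) (0,0,0) 0"
definition oe2 :: "'a::comm_ring_1 oct" where "oe2 = Oct 0 (0,0,0) (0,0,0) 1"
definition ou1 :: "'a::comm_ring_1 oct" where "ou1 = Oct 0 (1,0,0) (0,0,0) 0"
definition ov1 :: "'a::comm_ring_1 oct" where "ov1 = Oct 0 (0,0,0) (1,0,0) 0"
definition oone :: "'a::comm_ring_1 oct" where "oone = oadd oe1 oe2"

definition quatM :: "'a::comm_ring_1 oct set" where
  "quatM = {Oct \<alpha> (\<gamma>,0,0) (\<delta>,0,0) \<beta> | \<alpha> \<beta> \<gamma> \<delta>. True}"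

definition G2 :: "('a::comm_ring_1 oct \<Rightarrow> 'a oct) set" where
  "G2 = {g. bij g \<and> (\<forall>x y. g (oadd x y) = oadd (g x) (g y))
              \<and> (\<forall>c x. g (osmul c x) = osmul c (g x))
              \<and> (\<forall>x y. g (omult x y) = omult (g x) (g y))}"

definition StabM :: "('a::comm_ring_1 oct \<Rightarrow> 'a oct) set" where
  "StabM = {g \<in> G2. g ` quatM \<subseteq> quatM}"

definition alg_closed :: "'a::field itself \<Rightarrow> bool" where
  "alg_closed _ \<longleftrightarrow> (\<forall>p :: 'a poly. degree p > 0 \<longrightarrow> (\<exists>x. poly p x = 0))"

end

theory Submission
  imports Defs
begin

definition c11 :: "'a::comm_ring_1 \<Rightarrow> 'a \<Rightarrow> 'a \<Rightarrow> 'a \<Rightarrow> 'a \<Rightarrow> 'a \<Rightarrow> 'a \<Rightarrow> 'a \<Rightarrow> 'a" where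
  "c11 a b c d m11 m12 m21 m22 = (a*m11 + b*m21)*d - (a*m12 + b*m22)*c"
definition c12 :: "'a::comm_ring_1 \<Rightarrow> 'a \<Rightarrow> 'a \<Rightarrow> 'a \<Rightarrow> 'a \<Rightarrow> 'a \<Rightarrow> 'a \<Rightarrow> 'a \<Rightarrow> 'a" where
  "c12 a b c d m11 m12 m21 m22 = (a*m12 + b*m22)*a - (a*m11 + b*m21)*b"
definition c21 :: "'a::comm_ring_1 \<Rightarrow> 'a \<Rightarrow> 'a \<Rightarrow> 'a \<Rightarrow> 'a \<Rightarrow> 'a \<Rightarrow> 'a \<Rightarrow> 'a \<Rightarrow> 'a" where
  "c21 a b c d m11 m12 m21 m22 = (c*m11 + d*m21)*d - (c*m12 + d*m22)*c"
definition c22 :: "'a::comm_ring_1 \<Rightarrow> 'a \<Rightarrow> 'a \<Rightarrow> 'a \<Rightarrow> 'a \<Rightarrow> 'a \<Rightarrow> 'a \<Rightarrow> 'a \<Rightarrow> 'a" where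
  "c22 a b c d m11 m12 m21 m22 = (c*m12 + d*m22)*a - (c*m11 + d*m21)*b"

definition psiP :: "'a::comm_ring_1 \<Rightarrow> 'a \<Rightarrow> 'a \<Rightarrow> 'a \<Rightarrow> 'a oct \<Rightarrow> 'a oct" where
  "psiP a b c d x = (case x of Oct al (u1,u2,u3) (v1,v2,v3) be \<Rightarrow>
     Oct (c11 a b c d al u1 v1 be)
         (c12 a b c d al u1 v1 be, c11 a b c d u2 v3 u3 (-v2), c21 a b c d u2 v3 u3 (-v2))
         (c21 a b c d al u1 v1 be, - c22 a b c d u2 v3 u3 (-v2), c12 a b c d u2 v3 u3 (-v2))
         (c22 a b c d al u1 v1 be))"

lemma psiP_Oct: "psiP a b c d (Oct al (u1,u2,u3) (v1,v2,v3) be) =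
     Oct (c11 a b c d al u1 v1 be)
         (c12 a b c d al u1 v1 be, c11 a b c d u2 v3 u3 (-v2), c21 a b c d u2 v3 u3 (-v2))
         (c21 a b c d al u1 v1 be, - c22 a b c d u2 v3 u3 (-v2), c12 a b c d u2 v3 u3 (-v2))
         (c22 a b c d al u1 v1 be)"
  by (simp add: psiP_def)

lemma oct_split: "(\<And>al u1 u2 u3 v1 v2 v3 be. x = Oct al (u1,u2,u3) (v1,v2,v3) be \<Longrightarrow> P) \<Longrightarrow> P"
  by (cases x) auto

lemmas odefs = oadd_def osmul_def omult_def vdot_def vcross_def vadd_def vsmul_def vneg_def
  c11_def c12_def c21_def c22_def otr_def onorm_def

lemma psi_mult: "omult (psiP a b c d x) (psiP a b c d y) = osmul (a*d-b*c) (psiP a b c d (omult x y))"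
proof -
  obtain al u1 u2 u3 v1 v2 v3 be where x: "x = Oct al (u1,u2,u3) (v1,v2,v3) be" by (rule oct_split)
  obtain al' u1' u2' u3' v1' v2' v3' be' where y: "y = Oct al' (u1',u2',u3') (v1',v2',v3') be'" by (rule oct_split)
  show ?thesis unfolding x y
    apply (simp add: psiP_Oct odefs)
    apply (intro conjI)
    apply (simp_all add: algebra_simps)
    done
qed

lemma osmul_smul: "osmul k (osmul l x) = osmul (k*l) (x::'a::comm_ring_1 oct)"
  by (cases x) (auto simp: odefs algebra_simps split: prod.splits)
lemma osmul_one: "osmul 1 (x::'a::comm_ring_1 oct) = x"
  by (cases x) (auto simp: odefs split: prod.splits)
lemma omult_smul: "omult (osmul k x) (osmul l y) = osmul (k*l) (omult x (y::'a::comm_ring_1 oct))"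
proof -
  obtain al u1 u2 u3 v1 v2 v3 be where x: "x = Oct al (u1,u2,u3) (v1,v2,v3) be" by (rule oct_split)
  obtain al' u1' u2' u3' v1' v2' v3' be' where y: "y = Oct al' (u1',u2',u3') (v1',v2',v3') be'" by (rule oct_split)
  show ?thesis unfolding x y by (simp add: odefs algebra_simps)
qed
lemma otr_smul: "otr (osmul k x) = k * otr (x::'a::comm_ring_1 oct)"
  by (simp add: odefs algebra_simps)
lemma onorm_smul: "onorm (osmul k x) = k^2 * onorm (x::'a::comm_ring_1 oct)"
  by (cases x) (auto simp: odefs algebra_simps power2_eq_square split: prod.splits)

lemma psi_smul: "psiP a b c d (osmul k x) = osmul k (psiP a b c d x)"
  by (rule oct_split[of x]) (simp add: psiP_Oct odefs algebra_simps)
lemma psi_add: "psiP a b c d (oadd x y) = oadd (psiP a b c d x) (psiP a b c d y)"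
proof -
  obtain al u1 u2 u3 v1 v2 v3 be where x: "x = Oct al (u1,u2,u3) (v1,v2,v3) be" by (rule oct_split)
  obtain al' u1' u2' u3' v1' v2' v3' be' where y: "y = Oct al' (u1',u2',u3') (v1',v2',v3') be'" by (rule oct_split)
  show ?thesis unfolding x y by (simp add: psiP_Oct odefs algebra_simps)
qed
lemma psi_adj: "psiP d (-b) (-c) a (psiP a b c d x) = osmul ((a*d-b*c)^2) x"
  by (rule oct_split[of x]) (simp add: psiP_Oct odefs algebra_simps power2_eq_square)
lemma psi_tr: "otr (psiP a b c d x) = (a*d-b*c) * otr x"
  by (rule oct_split[of x]) (simp add: psiP_Oct odefs algebra_simps)
lemma psi_norm: "onorm (psiP a b c d x) = (a*d-b*c)^2 * onorm x"
  by (rule oct_split[of x]) (simp add: psiP_Oct odefs algebra_simps power2_eq_square)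

definition phiP :: "'a::field \<Rightarrow> 'a \<Rightarrow> 'a \<Rightarrow> 'a \<Rightarrow> 'a oct \<Rightarrow> 'a oct" where
  "phiP a b c d x = osmul (inverse (a*d-b*c)) (psiP a b c d x)"

lemma inv_sq: "D \<noteq> (0::'a::field) \<Longrightarrow> inverse D * (inverse D * D^2) = 1"
  by (simp add: power2_eq_square mult.assoc[symmetric])

lemma inv_sq2: "D \<noteq> (0::'a::field) \<Longrightarrow> inverse D * inverse D * D = inverse D"
  by (simp add: mult.assoc)

lemma phi_inv: assumes "a*d-b*c \<noteq> (0::'a::field)"
  shows "phiP d (-b) (-c) a (phiP a b c d x) = x"
proof -
  have e: "d*a - (-b)*(-c) = a*d-b*c" by (simp add: algebra_simps)
  show ?thesis unfolding phiP_def e psi_smul psi_adj osmul_smul inv_sq[OF assms] osmul_one ..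
qed

lemma phi_G2: assumes "a*d-b*c \<noteq> (0::'a::field)" shows "phiP a b c d \<in> G2"
proof -
  have e: "d*a - (-b)*(-c) = a*d-b*c" by (simp add: algebra_simps)
  have i1: "\<And>x. phiP d (-b) (-c) a (phiP a b c d x) = x" using phi_inv[OF assms] .
  have i2: "\<And>x. phiP a b c d (phiP d (-b) (-c) a x) = x"
    using phi_inv[where a=d and b="-b" and c="-c" and d=a] assms e by (simp add: mult.commute)
  have "bij (phiP a b c d)"
    by (rule o_bij[of "phiP d (-b) (-c) a"]) (auto simp: i1 i2 fun_eq_iff)
  moreover have "\<forall>x y. phiP a b c d (oadd x y) = oadd (phiP a b c d x) (phiP a b c d y)"
  proof (intro allI)
    fix x y :: "'a oct"
    show "phiP a b c d (oadd x y) = oadd (phiP a b c d x) (phiP a b c d y)"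
      unfolding phiP_def psi_add
      by (rule oct_split[of "psiP a b c d x"], rule oct_split[of "psiP a b c d y"])
         (simp add: odefs algebra_simps)
  qed
  moreover have "\<forall>k x. phiP a b c d (osmul k x) = osmul k (phiP a b c d x)"
    by (simp add: phiP_def psi_smul osmul_smul mult.commute)
  moreover have "\<forall>x y. phiP a b c d (omult x y) = omult (phiP a b c d x) (phiP a b c d y)"
    unfolding phiP_def omult_smul psi_mult osmul_smul inv_sq2[OF assms] by simp
  ultimately show ?thesis unfolding G2_def by blast
qed

lemma phi_M: "phiP a b c d (Oct al (g,0,0) (de,0,0) be) =
  Oct (inverse (a*d-b*c) * c11 a b c d al g de be) (inverse (a*d-b*c) * c12 a b c d al g de be,0,0)
      (inverse (a*d-b*c) * c21 a b c d al g de be,0,0) (inverse (a*d-b*c) * c22 a b c d al g de be)"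
  by (simp add: phiP_def psiP_Oct odefs)

lemma phi_StabM: assumes "a*d-b*c \<noteq> (0::'a::field)" shows "phiP a b c d \<in> StabM"
  using phi_G2[OF assms] unfolding StabM_def quatM_def by (auto simp: phi_M)

lemma phi_tr: assumes "a*d-b*c \<noteq> (0::'a::field)" shows "otr (phiP a b c d x) = otr x"
  using assms by (simp add: phiP_def otr_smul psi_tr)
lemma phi_norm: assumes "a*d-b*c \<noteq> (0::'a::field)" shows "onorm (phiP a b c d x) = onorm x"
  unfolding phiP_def onorm_smul psi_norm power_inverse[symmetric] mult.assoc[symmetric]
  using assms by (simp add: power_mult_distrib[symmetric])

lemma StabM_comp: assumes "f \<in> StabM" "g \<in> StabM" shows "f \<circ> g \<in> StabM"
  using assms unfolding StabM_def G2_def by (auto intro: bij_comp simp: image_subset_iff)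


lemma phi_eq:
  assumes "a*d-b*c = D" "D \<noteq> (0::'a::field)"
    "c11 a b c d al g de be = D*y11" "c12 a b c d al g de be = D*y12"
    "c21 a b c d al g de be = D*y21" "c22 a b c d al g de be = D*y22"
  shows "phiP a b c d (Oct al (g,0,0) (de,0,0) be) = Oct y11 (y12,0,0) (y21,0,0) y22"
  unfolding phi_M using assms by (simp add: mult.assoc[symmetric])

lemma quatM_E: "x \<in> quatM \<Longrightarrow> (\<And>al g de be. x = Oct al (g,0,0) (de,0,0) be \<Longrightarrow> P) \<Longrightarrow> P"
  unfolding quatM_def by blast

lemma part1:
  fixes x :: "'a::field oct"
  assumes "x \<in> quatM" "otr x = 1" "onorm x = 0"
  shows "\<exists>a b c d. a*d-b*c \<noteq> 0 \<and> phiP a b c d x = oe1"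
proof -
  obtain al g de be where x: "x = Oct al (g,0,0) (de,0,0) be" using assms(1) by (rule quatM_E)
  have h1: "al + be = 1" and h2: "al*be - g*de = 0" using assms unfolding x by (simp_all add: odefs)
  show ?thesis
  proof (cases "al = 0")
    case False
    have "phiP al g (-de) al x = oe1" unfolding x oe1_def
      apply (rule phi_eq[where D=al])
      using h1 h2 False unfolding c11_def c12_def c21_def c22_def
      by (simp_all, algebra+)
    moreover have "al*al - g*(-de) \<noteq> 0" using h1 h2 False by algebra
    ultimately show ?thesis by blast
  next
    case True
    hence b: "be = 1" using h1 by simp
    have "phiP de be (-be) g x = oe1" unfolding x oe1_def
      apply (rule phi_eq[where D=be])
      using h1 h2 b True unfolding c11_def c12_def c21_def c22_def
      by (simp_all, algebra+)
    moreover have "de*g - be*(-be) \<noteq> 0" using h1 h2 b True by algebra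
    ultimately show ?thesis by blast
  qed
qed

lemma oone_eq: "oone = Oct 1 (0,0,0) (0,0,0) (1::'a::comm_ring_1)"
  by (simp add: oone_def oe1_def oe2_def odefs)
lemma oone_u1_eq: "oadd oone ou1 = Oct 1 (1,0,0) (0,0,0) (1::'a::comm_ring_1)"
  by (simp add: oone_def oe1_def oe2_def ou1_def odefs)

lemma oe2_u1_eq: "oadd oe2 ou1 = Oct 0 (1,0,0) (0,0,0) (1::'a::comm_ring_1)"
  by (simp add: oe2_def ou1_def odefs)
lemma oe2_v1_eq: "oadd oe2 ov1 = Oct 0 (0,0,0) (1,0,0) (1::'a::comm_ring_1)"
  by (simp add: oe2_def ov1_def odefs)

lemma part2:
  fixes x :: "'a::field oct"
  assumes "x \<in> quatM" "otr x = 0" "onorm x = 1" and two: "(2::'a) = 0"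
  shows "\<exists>a b c d. a*d-b*c \<noteq> 0 \<and> phiP a b c d x \<in> {oone, oadd oone ou1}"
proof -
  obtain al g de be where x: "x = Oct al (g,0,0) (de,0,0) be" using assms(1) by (rule quatM_E)
  have h1: "al + be = 0" and h2: "al*be - g*de = 1" using assms unfolding x by (simp_all add: odefs)
  have h1': "al + be = 1 + 1" using h1 two by simp
  show ?thesis
  proof (cases "g = 0")
    case False
    have "phiP 1 0 (al-1) g x = oadd oone ou1" unfolding x oone_u1_eq
      apply (rule phi_eq[where D=g])
           apply simp
          apply (rule False)
      unfolding c11_def c12_def c21_def c22_def
      using h1' h2 by algebra+
    moreover have "1*g - 0*(al-1) \<noteq> 0" using False by simp
    ultimately show ?thesis by blast
  next
    case g0: True
    show ?thesis
    proof (cases "de = 0")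
      case False
      have "phiP 0 1 de (be-1) x = oadd oone ou1" unfolding x oone_u1_eq
        apply (rule phi_eq[where D="-de"])
             apply simp
            apply (simp add: False)
        unfolding c11_def c12_def c21_def c22_def
        using h1' h2 g0 by algebra+
      moreover have "0*(be-1) - 1*de \<noteq> 0" using False by simp
      ultimately show ?thesis by blast
    next
      case True
      have "(al - 1)^2 = 0" using h1' h2 g0 True by algebra
      hence a1: "al = 1" by simp
      have b1: "be = 1" using h1' a1 by algebra
      have "phiP 1 0 0 1 x = oone" unfolding x oone_eq
        by (rule phi_eq[where D=1]) (simp_all add: a1 b1 g0 True c11_def c12_def c21_def c22_def)
      moreover have "1*1 - 0*0 \<noteq> (0::'a)" by simp
      ultimately show ?thesis by blast
    qed
  qed
qed

lemma part3:
  fixes ga :: "'a::field"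
  assumes "ga \<noteq> 0"
  shows "\<exists>\<xi>\<in>StabM. \<forall>a1 a2 a3 a4.
        \<xi> (Oct a1 (a2,0,0) (a3,0,0) a4) = Oct a1 (ga*a2,0,0) (inverse ga * a3,0,0) a4"
proof (intro bexI allI)
  show "phiP ga 0 0 1 \<in> StabM" using assms by (intro phi_StabM) simp
  fix a1 a2 a3 a4 :: 'a
  show "phiP ga 0 0 1 (Oct a1 (a2,0,0) (a3,0,0) a4) = Oct a1 (ga*a2,0,0) (inverse ga * a3,0,0) a4"
    by (rule phi_eq[where D=ga]) (use assms in \<open>simp_all add: c11_def c12_def c21_def c22_def field_simps\<close>)
qed

lemma phi_omult: "a*d-b*c \<noteq> (0::'a::field) \<Longrightarrow> phiP a b c d (omult x y) = omult (phiP a b c d x) (phiP a b c d y)"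
  using phi_G2 unfolding G2_def by blast

lemma part4:
  fixes b1 b2 :: "'a::field oct"
  assumes "b1 \<in> quatM" "b2 \<in> quatM" "otr b1 = otr oe1" "otr b2 = otr oe2"
        "onorm b1 = onorm oe1" "onorm b2 = onorm oe2"
        "otr (omult b1 b2) = otr (omult oe1 oe2)"
  shows "\<exists>g\<in>StabM. g b1 = oe1 \<and> g b2 \<in> {oe2, oadd oe2 ou1, oadd oe2 ov1}"
proof -
  have t1: "otr b1 = 1" "onorm b1 = 0" using assms by (simp_all add: oe1_def odefs)
  obtain a b c d where P: "a*d-b*c \<noteq> 0" and Pb1: "phiP a b c d b1 = oe1"
    using part1[OF assms(1) t1] by blast
  have "phiP a b c d b2 \<in> quatM" using phi_StabM[OF P] assms(2) unfolding StabM_def by blast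
  then obtain al g de be where c2: "phiP a b c d b2 = Oct al (g,0,0) (de,0,0) be" by (rule quatM_E)
  have "otr (phiP a b c d b2) = 1" using phi_tr[OF P] assms by (simp add: oe2_def odefs)
  hence h1: "al + be = 1" by (simp add: c2 odefs)
  have "onorm (phiP a b c d b2) = 0" using phi_norm[OF P] assms by (simp add: oe2_def odefs)
  hence h2: "al*be - g*de = 0" by (simp add: c2 odefs)
  have "omult oe1 (phiP a b c d b2) = phiP a b c d (omult b1 b2)"
    using phi_omult[OF P, of b1 b2] Pb1 by simp
  hence "otr (omult oe1 (phiP a b c d b2)) = otr (omult oe1 oe2)"
    using phi_tr[OF P] assms(7) by simp
  hence "otr (omult oe1 (phiP a b c d b2)) = 0" by (simp add: oe1_def oe2_def odefs)
  hence h3: "al = 0" by (simp add: c2 oe1_def odefs)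
  have be1: "be = 1" using h1 h3 by simp
  have gd: "g*de = 0" using h2 h3 by simp
  have e1fix: "\<And>p q. p*q - 0*0 \<noteq> 0 \<Longrightarrow> phiP p 0 0 q oe1 = oe1"
    unfolding oe1_def
    by (rule phi_eq) (simp_all add: c11_def c12_def c21_def c22_def)
  have "\<exists>p q. p*q - 0*0 \<noteq> (0::'a) \<and> phiP p 0 0 q (Oct al (g,0,0) (de,0,0) be) \<in> {oe2, oadd oe2 ou1, oadd oe2 ov1}"
  proof (cases "g = 0")
    case False
    hence "de = 0" using gd by simp
    hence "phiP 1 0 0 g (Oct al (g,0,0) (de,0,0) be) = oadd oe2 ou1"
      unfolding oe2_u1_eq
      by (intro phi_eq[where D=g]) (use False h3 be1 in \<open>simp_all add: c11_def c12_def c21_def c22_def\<close>)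
    thus ?thesis using False by (intro exI[of _ 1] exI[of _ g]) simp
  next
    case g0: True
    show ?thesis
    proof (cases "de = 0")
      case False
      hence "phiP de 0 0 1 (Oct al (g,0,0) (de,0,0) be) = oadd oe2 ov1"
        unfolding oe2_v1_eq
        by (intro phi_eq[where D=de]) (use False g0 h3 be1 in \<open>simp_all add: c11_def c12_def c21_def c22_def\<close>)
      thus ?thesis using False by (intro exI[of _ de] exI[of _ 1]) simp
    next
      case True
      hence "phiP 1 0 0 1 (Oct al (g,0,0) (de,0,0) be) = oe2"
        unfolding oe2_def
        by (intro phi_eq[where D=1]) (use True g0 h3 be1 in \<open>simp_all add: c11_def c12_def c21_def c22_def\<close>)
      thus ?thesis by (intro exI[of _ 1] exI[of _ 1]) simp
    qed
  qed
  then obtain p q where pq: "p*q - 0*0 \<noteq> (0::'a)"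
    and res: "phiP p 0 0 q (Oct al (g,0,0) (de,0,0) be) \<in> {oe2, oadd oe2 ou1, oadd oe2 ov1}" by blast
  show ?thesis
  proof (rule bexI[of _ "phiP p 0 0 q \<circ> phiP a b c d"])
    show "phiP p 0 0 q \<circ> phiP a b c d \<in> StabM" using StabM_comp phi_StabM P pq by blast
    show "(phiP p 0 0 q \<circ> phiP a b c d) b1 = oe1 \<and> (phiP p 0 0 q \<circ> phiP a b c d) b2 \<in> {oe2, oadd oe2 ou1, oadd oe2 ov1}"
      using Pb1 e1fix[OF pq] c2 res by simp
  qed
qed

lemma part5:
  fixes b :: "'a::field oct"
  assumes "b \<in> quatM" "otr b = 0" "onorm b = 0" "otr (omult oe1 b) = 0"
  shows "(\<exists>c. b = osmul c ou1) \<or> (\<exists>c. b = osmul c ov1)"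
proof -
  obtain al g de be where x: "b = Oct al (g,0,0) (de,0,0) be" using assms(1) by (rule quatM_E)
  have a0: "al = 0" using assms(4) by (simp add: x oe1_def odefs)
  have b0: "be = 0" using assms(2) a0 by (simp add: x odefs)
  have "g*de = 0" using assms(3) a0 b0 by (simp add: x odefs)
  hence "g = 0 \<or> de = 0" by simp
  thus ?thesis
  proof
    assume "g = 0" thus ?thesis using a0 b0
      by (intro disjI2 exI[of _ de]) (simp add: x ov1_def odefs)
  next
    assume "de = 0" thus ?thesis using a0 b0
      by (intro disjI1 exI[of _ g]) (simp add: x ou1_def odefs)
  qed
qed

theorem lemma7p5:
  fixes F :: "'a::field itself"
  assumes "alg_closed TYPE('a)"
    and "(2::'a) = 0"
  shows
   "(\<forall>a::'a oct. a \<in> quatM \<and> otr a = 1 \<and> onorm a = 0 \<longrightarrow> (\<exists>g\<in>StabM. g a = oe1))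
  \<and> (\<forall>a::'a oct. a \<in> quatM \<and> otr a = 0 \<and> onorm a = 1 \<longrightarrow>
        (\<exists>g\<in>StabM. g a \<in> {oone, oadd oone ou1}))
  \<and> (\<forall>\<gamma>::'a. \<gamma> \<noteq> 0 \<longrightarrow> (\<exists>\<xi>\<in>StabM. \<forall>\<alpha>1 \<alpha>2 \<alpha>3 \<alpha>4.
        \<xi> (Oct \<alpha>1 (\<alpha>2,0,0) (\<alpha>3,0,0) \<alpha>4) = Oct \<alpha>1 (\<gamma>*\<alpha>2,0,0) (inverse \<gamma> * \<alpha>3,0,0) \<alpha>4))
  \<and> (\<forall>b1 b2::'a oct. b1 \<in> quatM \<and> b2 \<in> quatM \<and> otr b1 = otr oe1 \<and> otr b2 = otr oe2
        \<and> onorm b1 = onorm oe1 \<and> onorm b2 = onorm oe2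
        \<and> otr (omult b1 b2) = otr (omult oe1 oe2) \<longrightarrow>
        (\<exists>g\<in>StabM. g b1 = oe1 \<and> g b2 \<in> {oe2, oadd oe2 ou1, oadd oe2 ov1}))
  \<and> (\<forall>b::'a oct. b \<in> quatM \<and> otr b = 0 \<and> onorm b = 0 \<and> otr (omult oe1 b) = 0 \<longrightarrow>
        (\<exists>c. b = osmul c ou1) \<or> (\<exists>c. b = osmul c ov1))"
proof (intro conjI allI impI)
  fix a :: "'a oct" assume h: "a \<in> quatM \<and> otr a = 1 \<and> onorm a = 0"
  then obtain p q r s where "p*s-q*r \<noteq> 0" "phiP p q r s a = oe1" using part1 by blast
  thus "\<exists>g\<in>StabM. g a = oe1" using phi_StabM by blast
next
  fix a :: "'a oct" assume h: "a \<in> quatM \<and> otr a = 0 \<and> onorm a = 1"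
  then obtain p q r s where "p*s-q*r \<noteq> 0" "phiP p q r s a \<in> {oone, oadd oone ou1}"
    using part2[OF _ _ _ assms(2)] by blast
  thus "\<exists>g\<in>StabM. g a \<in> {oone, oadd oone ou1}" using phi_StabM by blast
next
  fix ga :: 'a assume "ga \<noteq> 0"
  thus "\<exists>\<xi>\<in>StabM. \<forall>\<alpha>1 \<alpha>2 \<alpha>3 \<alpha>4.
        \<xi> (Oct \<alpha>1 (\<alpha>2,0,0) (\<alpha>3,0,0) \<alpha>4) = Oct \<alpha>1 (ga*\<alpha>2,0,0) (inverse ga * \<alpha>3,0,0) \<alpha>4"
    by (rule part3)
next
  fix b1 b2 :: "'a oct"
  assume "b1 \<in> quatM \<and> b2 \<in> quatM \<and> otr b1 = otr oe1 \<and> otr b2 = otr oe2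
        \<and> onorm b1 = onorm oe1 \<and> onorm b2 = onorm oe2
        \<and> otr (omult b1 b2) = otr (omult oe1 oe2)"
  thus "\<exists>g\<in>StabM. g b1 = oe1 \<and> g b2 \<in> {oe2, oadd oe2 ou1, oadd oe2 ov1}"
    using part4 by blast
next
  fix b :: "'a oct" assume "b \<in> quatM \<and> otr b = 0 \<and> onorm b = 0 \<and> otr (omult oe1 b) = 0"
  thus "(\<exists>c. b = osmul c ou1) \<or> (\<exists>c. b = osmul c ov1)" using part5 by blast
qed

end
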